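(* Let $\tau$ be a trace on $\widehat{TL}_3(q)$, let $X=g_{\sigma_2}g_{\sigma_1}g_{a_3}$, $u=g_{\sigma_2}g_{a_3}g_{\sigma_2}^{-1}$, and let $r\le s$ be positive integers. Then there exist an integer $0\le h\le s$, elements $c_0,\dots,c_h\in B$ and finitely many Markov elements $M_i$ such that $$\tau\Big(g_{a_3}\,u\,(g_{\sigma_1}u)^{s}\,g_{a_3}\,(g_{\sigma_1}u)^{r}\Big)=\tau\Big(\sum_{j=0}^{h}c_jX^{j}+\sum_iM_i\Big).$$
   Context: $K$ is an integral domain of characteristic $0$, $q\in K$ invertible and a square, $q+1$ invertible. $\widehat{TL}_3(q)$ is the unital $K$-algebra generated by $g_{\sigma_1},g_{\sigma_2},g_{a_3}$ with relations $g_{\sigma_1}g_{\sigma_2}g_{\sigma_1}=g_{\sigma_2}g_{\sigma_1}g_{\sigma_2}$, $g_{\sigma_i}g_{a_3}g_{\sigma_i}=g_{a_3}g_{\sigma_i}g_{a_3}$ ($i=1,2$), $x^2=(q-1)x+q$ for each generator $x$, and $V(g_{\sigma_1},g_{\sigma_2})=V(g_{\sigma_1},g_{a_3})=V(g_{\sigma_2},g_{a_3})=0$ where $V(x,y)=xyx+xy+yx+x+y+1$. $B$ is the unital subalgebra generated by $g_{\sigma_1}$ and $u$. A Markov element is an element $A\,g_{\sigma_2}^{\epsilon}A'$ with $A,A'\in B$, $\epsilon\in\{0,1\}$. A trace is a $K$-linear map $\tau:\widehat{TL}_3(q)\to K$ with $\tau(xy)=\tau(yx)$. *)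

theory Defs
  imports Main
begin

text \<open>A unital K-algebra is modelled as a ring A (type class ring_1) together with a
  central unital ring homomorphism ofK : K -> A (scalar multiplication c x = ofK c * x).\<close>

definition central_hom :: "('k::comm_ring_1 \<Rightarrow> 'a::ring_1) \<Rightarrow> bool" where
  "central_hom ofK \<longleftrightarrow>
     ofK 1 = 1 \<and> (\<forall>c d. ofK (c + d) = ofK c + ofK d) \<and> (\<forall>c d. ofK (c * d) = ofK c * ofK d)
     \<and> (\<forall>c x. ofK c * x = x * ofK c)"

definition is_trace :: "('k::comm_ring_1 \<Rightarrow> 'a::ring_1) \<Rightarrow> ('a \<Rightarrow> 'k) \<Rightarrow> bool" where
  "is_trace ofK \<tau> \<longleftrightarrow>
     (\<forall>x y. \<tau> (x + y) = \<tau> x + \<tau> y) \<and> (\<forall>c x. \<tau> (ofK c * x) = c * \<tau> x)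
     \<and> (\<forall>x y. \<tau> (x * y) = \<tau> (y * x))"

definition Vrel :: "'a::ring_1 \<Rightarrow> 'a \<Rightarrow> 'a" where
  "Vrel x y = x*y*x + x*y + y*x + x + y + 1"

definition quad_rel :: "('k::comm_ring_1 \<Rightarrow> 'a::ring_1) \<Rightarrow> 'k \<Rightarrow> 'a \<Rightarrow> bool" where
  "quad_rel ofK q x \<longleftrightarrow> x^2 = ofK (q - 1) * x + ofK q"

text \<open>Defining relations of the algebra hat-TL_3(q) on generators g1 = g_sigma1,
  g2 = g_sigma2, g3 = g_a3.\<close>
definition TL3_rels :: "('k::comm_ring_1 \<Rightarrow> 'a::ring_1) \<Rightarrow> 'k \<Rightarrow> 'a \<Rightarrow> 'a \<Rightarrow> 'a \<Rightarrow> bool" where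
  "TL3_rels ofK q g1 g2 g3 \<longleftrightarrow>
     g1*g2*g1 = g2*g1*g2 \<and> g1*g3*g1 = g3*g1*g3 \<and> g2*g3*g2 = g3*g2*g3
     \<and> quad_rel ofK q g1 \<and> quad_rel ofK q g2 \<and> quad_rel ofK q g3
     \<and> Vrel g1 g2 = 0 \<and> Vrel g1 g3 = 0 \<and> Vrel g2 g3 = 0"

inductive_set subalg :: "('k::comm_ring_1 \<Rightarrow> 'a::ring_1) \<Rightarrow> 'a set \<Rightarrow> 'a set"
  for ofK S where
  scal: "ofK c \<in> subalg ofK S"
| gen: "x \<in> S \<Longrightarrow> x \<in> subalg ofK S"
| add: "x \<in> subalg ofK S \<Longrightarrow> y \<in> subalg ofK S \<Longrightarrow> x + y \<in> subalg ofK S"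
| mult: "x \<in> subalg ofK S \<Longrightarrow> y \<in> subalg ofK S \<Longrightarrow> x * y \<in> subalg ofK S"

definition markov :: "'a set \<Rightarrow> 'a::ring_1 \<Rightarrow> 'a \<Rightarrow> bool" where
  "markov B g2 M \<longleftrightarrow> (\<exists>a a' \<epsilon>::nat. a \<in> B \<and> a' \<in> B \<and> \<epsilon> \<le> 1 \<and> M = a * g2 ^ \<epsilon> * a')"

end

theory Submission
  imports Defs
begin

locale tlx =
  fixes ofK :: "'k::comm_ring_1 \<Rightarrow> 'a::ring_1"
    and q q' :: 'k and g1 g2 g3 g2i g1i u X T :: 'a
  assumes hom: "central_hom ofK"
    and rels: "TL3_rels ofK q g1 g2 g3"
    and inv1: "g2 * g2i = 1" and inv2: "g2i * g2 = 1"
    and qq: "q * q' = 1"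
    and g1i_def: "g1i = ofK q' * g1 - ofK (q' * (q - 1))"
    and u_def: "u = g2 * g3 * g2i"
    and X_def: "X = g2 * g1 * g3"
    and T_def: "T = g1 * u"
begin

abbreviation "B \<equiv> subalg ofK {g1, u}"

lemma ofK_1: "ofK 1 = 1" using hom unfolding central_hom_def by blast
lemma ofK_add: "ofK (c + d) = ofK c + ofK d" using hom unfolding central_hom_def by blast
lemma ofK_mult: "ofK (c * d) = ofK c * ofK d" using hom unfolding central_hom_def by blast
lemma ofK_comm: "ofK c * x = x * ofK c" using hom unfolding central_hom_def by blast
lemma ofK_0: "ofK 0 = 0"
proof -
  have "ofK 0 = ofK 0 + ofK 0" using ofK_add[of 0 0] by (simp only: add_0_left)
  thus ?thesis by (metis add_cancel_right_right)
qed
lemma ofK_neg: "ofK (- c) = - ofK c"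
proof -
  have "ofK (-c) + ofK c = 0" using ofK_add[of "-c" c] ofK_0 by simp
  thus ?thesis by (simp add: add_eq_0_iff2)
qed
lemma ofK_diff: "ofK (c - d) = ofK c - ofK d"
  using ofK_add[of c "-d"] ofK_neg[of d] by simp

lemma comm_l: "x * (ofK c * y) = ofK c * (x * y)"
proof -
  have "x * (ofK c * y) = (x * ofK c) * y" by (simp only: mult.assoc)
  also have "x * ofK c = ofK c * x" by (rule ofK_comm[symmetric])
  finally show ?thesis by (simp only: mult.assoc)
qed

lemma br12: "g1*g2*g1 = g2*g1*g2" using rels by (simp add: TL3_rels_def)
lemma br13: "g1*g3*g1 = g3*g1*g3" using rels by (simp add: TL3_rels_def)
lemma br23: "g2*g3*g2 = g3*g2*g3" using rels by (simp add: TL3_rels_def)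
lemma q1: "g1*g1 = ofK (q-1) * g1 + ofK q" using rels by (simp add: TL3_rels_def quad_rel_def power2_eq_square)
lemma q2: "g2*g2 = ofK (q-1) * g2 + ofK q" using rels by (simp add: TL3_rels_def quad_rel_def power2_eq_square)
lemma q3: "g3*g3 = ofK (q-1) * g3 + ofK q" using rels by (simp add: TL3_rels_def quad_rel_def power2_eq_square)

lemma br12r: "g1*(g2*g1) = g2*(g1*g2)" using br12 by (simp add: mult.assoc)
lemma br12x: "g1*(g2*(g1*x)) = g2*(g1*(g2*x))" using br12 by (metis mult.assoc)
lemma br13r: "g1*(g3*g1) = g3*(g1*g3)" using br13 by (simp add: mult.assoc)
lemma br13x: "g1*(g3*(g1*x)) = g3*(g1*(g3*x))" using br13 by (metis mult.assoc)
lemma br23r: "g2*(g3*g2) = g3*(g2*g3)" using br23 by (simp add: mult.assoc)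
lemma br23x: "g2*(g3*(g2*x)) = g3*(g2*(g3*x))" using br23 by (metis mult.assoc)
lemma inv1x: "g2*(g2i*x) = x" using inv1 by (metis mult.assoc mult_1_left)
lemma inv2x: "g2i*(g2*x) = x" using inv2 by (metis mult.assoc mult_1_left)

lemma g2_lin: "g2 = ofK (q-1) + ofK q * g2i"
proof -
  have "g2 = g2i * (g2 * g2)" by (simp add: mult.assoc[symmetric] inv2)
  also have "\<dots> = g2i * (ofK (q-1) * g2 + ofK q)" by (simp only: q2)
  also have "\<dots> = ofK (q-1) * (g2i * g2) + g2i * ofK q" by (simp only: distrib_left comm_l)
  also have "\<dots> = ofK (q-1) + ofK q * g2i" by (simp add: inv2 ofK_comm)
  finally show ?thesis .
qed

lemma qg2i: "ofK q * g2i = g2 - ofK (q-1)"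
  using g2_lin by (simp add: algebra_simps)

lemma g2i_expl: "g2i = ofK q' * g2 - ofK (q' * (q-1))"
proof -
  have "ofK q' * (ofK q * g2i) = ofK q' * g2 - ofK (q' * (q-1))"
    by (simp only: qg2i right_diff_distrib[of "ofK q'"] ofK_mult)
  moreover have "ofK q' * (ofK q * g2i) = g2i"
    by (simp add: mult.assoc[symmetric] ofK_mult[symmetric] qq mult.commute[of q'] ofK_1)
  ultimately show ?thesis by simp
qed

lemma g1i_g1: "g1i * g1 = 1"
proof -
  have "g1i * g1 = ofK q' * (g1 * g1) - ofK (q' * (q - 1)) * g1"
    by (simp add: g1i_def left_diff_distrib mult.assoc)
  also have "\<dots> = ofK q' * (ofK (q-1) * g1) + ofK q' * ofK q - ofK (q' * (q - 1)) * g1"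
    by (simp only: q1 distrib_left)
  also have "\<dots> = ofK (q' * q)"
    by (simp add: mult.assoc[symmetric] ofK_mult[symmetric])
  also have "\<dots> = 1" by (simp add: qq mult.commute[of q'] ofK_1)
  finally show ?thesis .
qed

lemma g1_g1i: "g1 * g1i = 1"
proof -
  have "g1 * g1i = ofK q' * (g1 * g1) - ofK (q' * (q - 1)) * g1"
    by (simp add: g1i_def right_diff_distrib comm_l ofK_comm[of _ g1, symmetric] mult.assoc)
  also have "\<dots> = ofK q' * (ofK (q-1) * g1) + ofK q' * ofK q - ofK (q' * (q - 1)) * g1"
    by (simp only: q1 distrib_left)
  also have "\<dots> = ofK (q' * q)"
    by (simp add: mult.assoc[symmetric] ofK_mult[symmetric])
  also have "\<dots> = 1" by (simp add: qq mult.commute[of q'] ofK_1)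
  finally show ?thesis .
qed

lemma g1i_g1x: "g1i * (g1 * x) = x" using g1i_g1 by (metis mult.assoc mult_1_left)
lemma g1_g1ix: "g1 * (g1i * x) = x" using g1_g1i by (metis mult.assoc mult_1_left)

lemma g3u: "g3 * u = g2 * g3"
proof -
  have "g3 * u = g3 * (g2 * (g3 * g2i))" by (simp add: u_def mult.assoc)
  also have "\<dots> = g2 * (g3 * (g2 * g2i))" by (simp only: br23x[symmetric])
  finally show ?thesis by (simp add: inv1)
qed

lemma g2g3: "g2 * g3 = u * g2"
  by (simp add: u_def mult.assoc inv2)

lemma Xg1: "X * g1 = u * X"
proof -
  have "X * g1 = g2 * (g1 * (g3 * g1))" by (simp add: X_def mult.assoc)
  also have "\<dots> = g2 * (g3 * (g2i * (g2 * (g1 * g3))))" by (simp only: br13r inv2x)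
  finally show ?thesis by (simp add: u_def X_def mult.assoc)
qed

lemma Xu: "X * u = g1 * X"
proof -
  have "X * u = g2 * (g1 * (g3 * (g2 * (g3 * g2i))))" by (simp add: X_def u_def mult.assoc)
  also have "\<dots> = g2 * (g1 * (g2 * (g3 * (g2 * g2i))))" by (simp only: br23x[symmetric])
  also have "\<dots> = g1 * (g2 * (g1 * g3))" by (simp only: inv1 mult_1_right br12x[symmetric])
  finally show ?thesis by (simp add: X_def mult.assoc)
qed

lemma Xg3: "X * g3 = ofK (q-1) * X + ofK q * (g2 * g1)"
proof -
  have "X * g3 = g2 * g1 * (g3 * g3)" by (simp add: X_def mult.assoc)
  also have "\<dots> = g2 * g1 * (ofK (q-1) * g3 + ofK q)" by (simp only: q3)
  also have "\<dots> = ofK (q-1) * X + ofK q * (g2 * g1)"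
    by (simp only: X_def distrib_left mult.assoc comm_l ofK_comm[of q "g2 * g1"])
  finally show ?thesis .
qed

lemma g3X: "g1i * g2i * X = g3"
proof -
  have "g1i * g2i * X = g1i * (g2i * (g2 * (g1 * g3)))" by (simp add: X_def mult.assoc)
  also have "\<dots> = (g1i * g1) * g3" by (simp add: inv2x mult.assoc)
  finally show ?thesis by (simp add: g1i_g1)
qed

lemma g1Xg2: "g1 * X * g2 = ofK (q-1) * (g1 * X) + ofK q * (g2 * g1 * u)"
proof -
  have "g1 * X * g2 = g1 * X * (ofK (q-1) + ofK q * g2i)" by (simp only: g2_lin[symmetric])
  also have "\<dots> = ofK (q-1) * (g1 * X) + ofK q * (g1 * X * g2i)"
    by (simp only: distrib_left mult.assoc comm_l ofK_comm[of "q-1" "g1 * X"])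
  also have "g1 * X * g2i = g2 * g1 * u"
    by (simp add: X_def u_def br12x mult.assoc)
  finally show ?thesis .
qed

lemma Xg2: "X * g2 = ofK (q-1) * X + ofK q * (g1i * g2 * (g1 * u))"
proof -
  have "X * g2 = g1i * (g1 * X * g2)" by (simp add: mult.assoc[symmetric] g1i_g1)
  also have "\<dots> = ofK (q-1) * X + ofK q * (g1i * g2 * (g1 * u))"
    by (simp only: g1Xg2, simp only: distrib_left mult.assoc comm_l g1i_g1x)
  finally show ?thesis .
qed

lemma g2T: "g2 * T = g1 * X * g2i"
  by (simp add: T_def X_def u_def br12x mult.assoc)


lemma B_ofK: "ofK c \<in> B" by (rule subalg.scal)
lemma B_g1: "g1 \<in> B" by (rule subalg.gen) simp
lemma B_u: "u \<in> B" by (rule subalg.gen) simp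
lemma B_add: "x \<in> B \<Longrightarrow> y \<in> B \<Longrightarrow> x + y \<in> B" by (rule subalg.add)
lemma B_mult: "x \<in> B \<Longrightarrow> y \<in> B \<Longrightarrow> x * y \<in> B" by (rule subalg.mult)
lemma B_0: "0 \<in> B" using B_ofK[of 0] ofK_0 by simp
lemma B_1: "1 \<in> B" using B_ofK[of 1] ofK_1 by simp
lemma B_neg: "x \<in> B \<Longrightarrow> - x \<in> B"
proof -
  assume "x \<in> B"
  hence "ofK (-1) * x \<in> B" by (intro B_mult B_ofK)
  thus ?thesis by (simp add: ofK_neg ofK_1)
qed
lemma B_diff: "x \<in> B \<Longrightarrow> y \<in> B \<Longrightarrow> x - y \<in> B"
  using B_add B_neg by (metis diff_conv_add_uminus)
lemma B_pow: "x \<in> B \<Longrightarrow> x ^ n \<in> B"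
  by (induction n) (simp_all add: B_1 B_mult)
lemma B_T: "T \<in> B" by (simp add: T_def B_mult B_g1 B_u)
lemma B_g1i: "g1i \<in> B" by (simp add: g1i_def B_diff B_mult B_ofK B_g1)

lemma X_comm: "b \<in> B \<Longrightarrow> \<exists>b'\<in>B. X * b = b' * X"
proof (induction rule: subalg.induct)
  case (scal c) thus ?case using B_ofK ofK_comm by metis
next
  case (gen x) thus ?case using Xg1 Xu B_g1 B_u by auto
next
  case (add x y) thus ?case using B_add by (metis distrib_left distrib_right)
next
  case (mult x y)
  then obtain a b where "a \<in> B" "X * x = a * X" "b \<in> B" "X * y = b * X" by blast
  hence "X * (x * y) = (a * b) * X" by (metis mult.assoc)
  thus ?case using \<open>a \<in> B\<close> \<open>b \<in> B\<close> B_mult by blast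
qed

lemma Xpow_comm: "b \<in> B \<Longrightarrow> \<exists>b'\<in>B. X ^ j * b = b' * X ^ j"
proof (induction j arbitrary: b)
  case 0 thus ?case by auto
next
  case (Suc j)
  then obtain a where a: "a \<in> B" "X ^ j * b = a * X ^ j" by blast
  then obtain a' where a': "a' \<in> B" "X * a = a' * X" using X_comm by blast
  have "X ^ Suc j * b = X * (X ^ j * b)" by (simp add: mult.assoc)
  also have "\<dots> = a' * X ^ Suc j" by (simp add: a a' mult.assoc[symmetric])
  finally show ?case using a' by blast
qed

definition Good :: "nat \<Rightarrow> 'a \<Rightarrow> bool" where
  "Good n z \<longleftrightarrow> (\<exists>c Ms. (\<forall>j\<le>n. c j \<in> B) \<and> (\<forall>M\<in>set Ms. markov B g2 M) \<and>
      z = (\<Sum>j = 0..n. c j * X ^ j) + sum_list Ms)"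

lemma markov1: "a \<in> B \<Longrightarrow> a' \<in> B \<Longrightarrow> markov B g2 (a * g2 * a')"
  unfolding markov_def by (rule exI[of _ a], rule exI[of _ a'], rule exI[of _ 1]) simp
lemma markov0: "a \<in> B \<Longrightarrow> a' \<in> B \<Longrightarrow> markov B g2 (a * a')"
  unfolding markov_def by (rule exI[of _ a], rule exI[of _ a'], rule exI[of _ 0]) simp

lemma Good_markov: "markov B g2 M \<Longrightarrow> Good n M"
  unfolding Good_def by (rule exI[of _ "\<lambda>_. 0"], rule exI[of _ "[M]"]) (simp add: B_0)

lemma Good_0: "Good n 0"
  unfolding Good_def by (rule exI[of _ "\<lambda>_. 0"], rule exI[of _ "[]"]) (simp add: B_0)

lemma Good_add: "Good n x \<Longrightarrow> Good n y \<Longrightarrow> Good n (x + y)"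
proof -
  assume "Good n x" "Good n y"
  then obtain c Ms d Ns where h: "\<forall>j\<le>n. c j \<in> B" "\<forall>M\<in>set Ms. markov B g2 M"
     "x = (\<Sum>j = 0..n. c j * X ^ j) + sum_list Ms"
     "\<forall>j\<le>n. d j \<in> B" "\<forall>M\<in>set Ns. markov B g2 M"
     "y = (\<Sum>j = 0..n. d j * X ^ j) + sum_list Ns" unfolding Good_def by blast
  show ?thesis unfolding Good_def
  proof (rule exI[of _ "\<lambda>j. c j + d j"], rule exI[of _ "Ms @ Ns"], intro conjI)
    show "\<forall>j\<le>n. c j + d j \<in> B" using h B_add by blast
    show "\<forall>M\<in>set (Ms @ Ns). markov B g2 M" using h by auto
    show "x + y = (\<Sum>j = 0..n. (c j + d j) * X ^ j) + sum_list (Ms @ Ns)"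
      by (simp add: h distrib_right sum.distrib algebra_simps)
  qed
qed

lemma Good_BX: "b \<in> B \<Longrightarrow> j \<le> n \<Longrightarrow> Good n (b * X ^ j)"
  unfolding Good_def
proof (rule exI[of _ "\<lambda>i. if i = j then b else 0"], rule exI[of _ "[]"], intro conjI)
  assume "b \<in> B" "j \<le> n"
  thus "\<forall>i\<le>n. (if i = j then b else 0) \<in> B" using B_0 by auto
  show "\<forall>M\<in>set []. markov B g2 M" by simp
  have "(\<Sum>i = 0..n. (if i = j then b else 0) * X ^ i) = (\<Sum>i = 0..n. if i = j then b * X ^ i else 0)"
    by (rule sum.cong) auto
  also have "\<dots> = b * X ^ j" using \<open>j \<le> n\<close> by (simp add: sum.delta')
  finally show "b * X ^ j = (\<Sum>i = 0..n. (if i = j then b else 0) * X ^ i) + sum_list []" by simp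
qed


lemma sum_list_lmul: "sum_list (map (\<lambda>M. b * M) Ms) = b * sum_list (Ms :: 'a list)"
  by (induction Ms) (simp_all add: distrib_left)
lemma sum_list_rmul: "sum_list (map (\<lambda>M. M * b) Ms) = sum_list (Ms :: 'a list) * b"
  by (induction Ms) (simp_all add: distrib_right)

lemma Good_lmul: "b \<in> B \<Longrightarrow> Good n z \<Longrightarrow> Good n (b * z)"
proof -
  assume b: "b \<in> B" and "Good n z"
  then obtain c Ms where h: "\<forall>j\<le>n. c j \<in> B" "\<forall>M\<in>set Ms. markov B g2 M"
     "z = (\<Sum>j = 0..n. c j * X ^ j) + sum_list Ms" unfolding Good_def by blast
  show ?thesis unfolding Good_def
  proof (rule exI[of _ "\<lambda>j. b * c j"], rule exI[of _ "map (\<lambda>M. b * M) Ms"], intro conjI)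
    show "\<forall>j\<le>n. b * c j \<in> B" using h b B_mult by blast
    show "\<forall>M\<in>set (map (\<lambda>M. b * M) Ms). markov B g2 M"
    proof
      fix M assume "M \<in> set (map (\<lambda>M. b * M) Ms)"
      then obtain N where N: "N \<in> set Ms" "M = b * N" by auto
      then obtain a a' and e :: nat where "a \<in> B" "a' \<in> B" "e \<le> 1" "N = a * g2 ^ e * a'"
        using h(2) unfolding markov_def by blast
      thus "markov B g2 M" unfolding markov_def using N b B_mult
        by (intro exI[of _ "b * a"] exI[of _ a'] exI[of _ e]) (simp add: mult.assoc)
    qed
    show "b * z = (\<Sum>j = 0..n. b * c j * X ^ j) + sum_list (map (\<lambda>M. b * M) Ms)"
      by (simp add: h(3) sum_list_lmul distrib_left sum_distrib_left mult.assoc)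
  qed
qed

lemma Good_rmul: "b \<in> B \<Longrightarrow> Good n z \<Longrightarrow> Good n (z * b)"
proof -
  assume b: "b \<in> B" and "Good n z"
  then obtain c Ms where h: "\<forall>j\<le>n. c j \<in> B" "\<forall>M\<in>set Ms. markov B g2 M"
     "z = (\<Sum>j = 0..n. c j * X ^ j) + sum_list Ms" unfolding Good_def by blast
  have "\<forall>j. \<exists>b'. b' \<in> B \<and> X ^ j * b = b' * X ^ j" using Xpow_comm[OF b] by blast
  then obtain f where f: "\<And>j. f j \<in> B" "\<And>j. X ^ j * b = f j * X ^ j" by metis
  show ?thesis unfolding Good_def
  proof (rule exI[of _ "\<lambda>j. c j * f j"], rule exI[of _ "map (\<lambda>M. M * b) Ms"], intro conjI)
    show "\<forall>j\<le>n. c j * f j \<in> B" using h f B_mult by blast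
    show "\<forall>M\<in>set (map (\<lambda>M. M * b) Ms). markov B g2 M"
    proof
      fix M assume "M \<in> set (map (\<lambda>M. M * b) Ms)"
      then obtain N where N: "N \<in> set Ms" "M = N * b" by auto
      then obtain a a' and e :: nat where "a \<in> B" "a' \<in> B" "e \<le> 1" "N = a * g2 ^ e * a'"
        using h(2) unfolding markov_def by blast
      thus "markov B g2 M" unfolding markov_def using N b B_mult
        by (intro exI[of _ a] exI[of _ "a' * b"] exI[of _ e]) (simp add: mult.assoc)
    qed
    have "(\<Sum>j = 0..n. c j * X ^ j) * b = (\<Sum>j = 0..n. c j * f j * X ^ j)"
      by (simp add: sum_distrib_right mult.assoc f(2))
    thus "z * b = (\<Sum>j = 0..n. c j * f j * X ^ j) + sum_list (map (\<lambda>M. M * b) Ms)"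
      by (simp add: h(3) sum_list_rmul distrib_right)
  qed
qed

lemma Good_mono: "m \<le> n \<Longrightarrow> Good m z \<Longrightarrow> Good n z"
proof -
  assume mn: "m \<le> n" and "Good m z"
  then obtain c Ms where h: "\<forall>j\<le>m. c j \<in> B" "\<forall>M\<in>set Ms. markov B g2 M"
     "z = (\<Sum>j = 0..m. c j * X ^ j) + sum_list Ms" unfolding Good_def by blast
  show ?thesis unfolding Good_def
  proof (rule exI[of _ "\<lambda>j. if j \<le> m then c j else 0"], rule exI[of _ Ms], intro conjI)
    show "\<forall>j\<le>n. (if j \<le> m then c j else 0) \<in> B" using h B_0 by auto
    show "\<forall>M\<in>set Ms. markov B g2 M" using h by blast
    have "(\<Sum>j = 0..n. (if j \<le> m then c j else 0) * X ^ j) = (\<Sum>j = 0..n. if j \<le> m then c j * X ^ j else 0)"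
      by (rule sum.cong) auto
    also have "\<dots> = (\<Sum>j \<in> {x \<in> {0..n}. x \<le> m}. c j * X ^ j)"
      by (rule sum.inter_filter[symmetric]) simp
    also have "{x \<in> {0..n}. x \<le> m} = {0..m}" using mn by auto
    finally show "z = (\<Sum>j = 0..n. (if j \<le> m then c j else 0) * X ^ j) + sum_list Ms"
      by (simp add: h(3))
  qed
qed

lemma Good_sum: "finite S \<Longrightarrow> (\<And>i. i \<in> S \<Longrightarrow> Good n (f i)) \<Longrightarrow> Good n (sum f S)"
  by (induction S rule: finite_induct) (simp_all add: Good_0 Good_add)

lemma Good_list: "(\<And>M. M \<in> set Ms \<Longrightarrow> Good n (f M)) \<Longrightarrow> Good n (sum_list (map f Ms))"
  by (induction Ms) (simp_all add: Good_0 Good_add)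

lemma Good_Xg2: "Good 1 (X * g2)"
proof -
  have "Good 1 (ofK (q-1) * X ^ 1)" by (rule Good_BX) (simp_all add: B_ofK)
  moreover have "Good 1 ((ofK q * g1i) * g2 * (g1 * u))"
    by (intro Good_markov markov1 B_mult B_ofK B_g1i B_g1 B_u)
  ultimately have "Good 1 (ofK (q-1) * X ^ 1 + (ofK q * g1i) * g2 * (g1 * u))" by (rule Good_add)
  thus ?thesis by (simp add: Xg2 mult.assoc)
qed

lemma Good_X: "Good n z \<Longrightarrow> Good (Suc n) (X * z)"
proof -
  assume "Good n z"
  then obtain c Ms where h: "\<forall>j\<le>n. c j \<in> B" "\<forall>M\<in>set Ms. markov B g2 M"
     "z = (\<Sum>j = 0..n. c j * X ^ j) + sum_list Ms" unfolding Good_def by blast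
  have eq: "X * z = (\<Sum>j = 0..n. X * (c j * X ^ j)) + sum_list (map (\<lambda>M. X * M) Ms)"
    by (simp add: h(3) distrib_left sum_distrib_left sum_list_lmul)
  have A: "Good (Suc n) (\<Sum>j = 0..n. X * (c j * X ^ j))"
  proof (rule Good_sum, simp)
    fix j assume "j \<in> {0..n}"
    hence "c j \<in> B" "j \<le> n" using h by auto
    then obtain c' where "c' \<in> B" "X * c j = c' * X" using X_comm by blast
    hence "X * (c j * X ^ j) = c' * X ^ Suc j" by (simp add: mult.assoc[symmetric])
    moreover have "Good (Suc n) (c' * X ^ Suc j)" using \<open>c' \<in> B\<close> \<open>j \<le> n\<close> by (intro Good_BX) simp_all
    ultimately show "Good (Suc n) (X * (c j * X ^ j))" by simp
  qed
  have C: "Good (Suc n) (sum_list (map (\<lambda>M. X * M) Ms))"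
  proof (rule Good_list)
    fix M assume "M \<in> set Ms"
    then obtain a a' and e :: nat where aa: "a \<in> B" "a' \<in> B" "e \<le> 1" "M = a * g2 ^ e * a'"
      using h(2) unfolding markov_def by blast
    then obtain a'' where a'': "a'' \<in> B" "X * a = a'' * X" using X_comm by blast
    have XM: "X * M = a'' * (X * g2 ^ e) * a'" by (simp add: aa(4) a''(2) mult.assoc[symmetric])
    show "Good (Suc n) (X * M)"
    proof (cases "e = 0")
      case True
      then obtain a3 where a3: "a3 \<in> B" "X * a' = a3 * X" using X_comm aa by blast
      have "X * M = (a'' * a3) * X ^ 1" using XM True a3 by (simp add: mult.assoc)
      moreover have "Good (Suc n) ((a'' * a3) * X ^ 1)" using a'' a3 B_mult by (intro Good_BX) simp_all
      ultimately show ?thesis by simp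
    next
      case False
      hence "e = 1" using aa by simp
      have "Good (Suc n) (X * g2)" using Good_Xg2 by (rule Good_mono[rotated]) simp
      hence "Good (Suc n) (a'' * (X * g2) * a')"
        using a'' aa by (intro Good_rmul[OF _ Good_lmul]) simp_all
      thus ?thesis using XM \<open>e = 1\<close> by simp
    qed
  qed
  show ?thesis using Good_add[OF A C] eq by simp
qed


lemma g2Tx: "g2 * (T * x) = g1 * (X * (g2i * x))"
  using g2T by (metis mult.assoc)

lemma Good_Sigma: "Good k (g2 * T ^ k * g1 * g2)"
proof (induction k)
  case 0
  have "Good 0 (g1 * g2 * g1)" by (intro Good_markov markov1 B_g1)
  thus ?case by (simp add: br12)
next
  case (Suc k)
  define Y where "Y = T ^ k * g1 * g2"
  have e1: "g2 * T ^ Suc k * g1 * g2 = g1 * (X * (g2i * Y))"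
    by (simp only: Y_def power_Suc mult.assoc g2Tx)
  have e2: "g2i * Y = ofK q' * (g2 * T ^ k * g1 * g2) + (ofK (- (q' * (q-1))) * (T ^ k * g1)) * g2 * 1"
    by (simp add: Y_def g2i_expl left_diff_distrib ofK_neg mult.assoc)
  have "Good k (ofK q' * (g2 * T ^ k * g1 * g2))" using Good_lmul[OF B_ofK Suc.IH] .
  moreover have "Good k ((ofK (- (q' * (q-1))) * (T ^ k * g1)) * g2 * 1)"
    by (intro Good_markov markov1 B_mult B_ofK B_pow B_T B_g1 B_1)
  ultimately have "Good k (g2i * Y)" unfolding e2 by (rule Good_add)
  hence "Good (Suc k) (X * (g2i * Y))" by (rule Good_X)
  hence "Good (Suc k) (g1 * (X * (g2i * Y)))" by (rule Good_lmul[OF B_g1])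
  thus ?case using e1 by simp
qed

lemma XTpow: "X * T ^ n = (u * g1) ^ n * X"
proof (induction n)
  case 0 show ?case by simp
next
  case (Suc n)
  have XT: "X * T = (u * g1) * X" by (simp add: T_def mult.assoc[symmetric] Xg1) (simp add: mult.assoc Xu)
  have "X * T ^ Suc n = (X * T) * T ^ n" by (simp add: mult.assoc)
  also have "\<dots> = (u * g1) * (X * T ^ n)" by (simp add: XT mult.assoc)
  also have "\<dots> = (u * g1) ^ Suc n * X" by (simp add: Suc.IH mult.assoc)
  finally show ?case .
qed

lemma shift_pow: "g1 * (u * g1) ^ n = (g1 * u) ^ n * g1"
proof (induction n)
  case 0 show ?case by simp
next
  case (Suc n)
  have "g1 * (u * g1) ^ Suc n = g1 * (u * g1) * (u * g1) ^ n" by (simp add: mult.assoc)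
  also have "\<dots> = (g1 * u) * (g1 * (u * g1) ^ n)" by (simp add: mult.assoc)
  also have "\<dots> = (g1 * u) ^ Suc n * g1" by (simp add: Suc.IH mult.assoc)
  finally show ?case .
qed


lemma W_eq:
  "g3 * u * T ^ s * g3 * T ^ r =
     (ofK (q-1) * u) * g2 * (T ^ s * T ^ r) + g1i * (g2 * T ^ s * g1 * g2) * (g1 * T ^ r)
     + (ofK (- (q-1)) * g1i * T ^ s * g1) * g2 * (g1 * T ^ r)"
proof -
  have a: "g3 * u * T ^ s = g1i * g2i * (T ^ s * g1 * X)"
  proof -
    have "g3 * u * T ^ s = g1i * g2i * (X * u * T ^ s)" by (simp add: g3X[symmetric] mult.assoc)
    also have "X * u * T ^ s = g1 * (X * T ^ s)" by (simp add: Xu mult.assoc)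
    also have "\<dots> = g1 * (u * g1) ^ s * X" by (simp add: XTpow mult.assoc)
    also have "\<dots> = T ^ s * g1 * X" by (simp add: shift_pow T_def)
    finally show ?thesis .
  qed
  have c: "g3 * u * T ^ s = u * g2 * T ^ s" by (simp add: g3u g2g3)
  have "g3 * u * T ^ s * g3 = g1i * g2i * (T ^ s * g1) * (X * g3)" by (simp only: a, simp only: mult.assoc)
  also have "\<dots> = ofK (q-1) * (g1i * g2i * (T ^ s * g1 * X)) + g1i * (ofK q * g2i) * (T ^ s * g1 * g2 * g1)"
    by (simp only: Xg3 distrib_left mult.assoc comm_l)
  also have "g1i * g2i * (T ^ s * g1 * X) = u * g2 * T ^ s" using a c by simp
  also have "ofK q * g2i = g2 - ofK (q-1)" by (rule qg2i)
  finally have b: "g3 * u * T ^ s * g3 = ofK (q-1) * (u * g2 * T ^ s) + g1i * (g2 - ofK (q-1)) * (T ^ s * g1 * g2 * g1)" .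
  have "g3 * u * T ^ s * g3 * T ^ r = (ofK (q-1) * (u * g2 * T ^ s) + g1i * (g2 - ofK (q-1)) * (T ^ s * g1 * g2 * g1)) * T ^ r"
    by (simp only: b)
  also have "\<dots> = (ofK (q-1) * u) * g2 * (T ^ s * T ^ r) + g1i * (g2 * T ^ s * g1 * g2) * (g1 * T ^ r)
     + (ofK (- (q-1)) * g1i * T ^ s * g1) * g2 * (g1 * T ^ r)"
    by (simp add: distrib_left distrib_right left_diff_distrib right_diff_distrib mult.assoc ofK_neg
          ofK_neg[of "q-1", simplified] comm_l ofK_comm[of _ g1i, symmetric])
  finally show ?thesis .
qed

lemma Good_W: "Good s (g3 * u * T ^ s * g3 * T ^ r)"
proof -
  have 1: "Good s ((ofK (q-1) * u) * g2 * (T ^ s * T ^ r))"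
    by (intro Good_markov markov1 B_mult B_ofK B_u B_pow B_T)
  have 2: "Good s (g1i * (g2 * T ^ s * g1 * g2) * (g1 * T ^ r))"
    by (rule Good_rmul[OF _ Good_lmul[OF B_g1i Good_Sigma]]) (intro B_mult B_g1 B_pow B_T)
  have 3: "Good s ((ofK (- (q-1)) * g1i * T ^ s * g1) * g2 * (g1 * T ^ r))"
    by (intro Good_markov markov1 B_mult B_ofK B_g1i B_pow B_T B_g1)
  show ?thesis unfolding W_eq by (intro Good_add 1 2 3)
qed


end

theorem lemma4p8:
  fixes ofK :: "'k::{idom, ring_char_0} \<Rightarrow> 'a::ring_1"
    and q :: 'k and g1 g2 g3 g2i :: 'a and \<tau> :: "'a \<Rightarrow> 'k" and r s :: nat
  assumes "\<exists>q'. q * q' = 1" and "\<exists>t. q = t * t" and "\<exists>t. (q + 1) * t = 1"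
    and "central_hom ofK"
    and "TL3_rels ofK q g1 g2 g3"
    and "g2 * g2i = 1" and "g2i * g2 = 1"
    and "is_trace ofK \<tau>"
    and "1 \<le> r" and "r \<le> s"
  shows "let X = g2 * g1 * g3; u = g2 * g3 * g2i; B = subalg ofK {g1, u} in
    \<exists>h c Ms. h \<le> s \<and> (\<forall>j\<le>h. c j \<in> B) \<and> (\<forall>M\<in>set Ms. markov B g2 M) \<and>
      \<tau> (g3 * u * (g1 * u) ^ s * g3 * (g1 * u) ^ r)
        = \<tau> ((\<Sum>j = 0..h. c j * X ^ j) + sum_list Ms)"
proof -
  obtain q' where qq: "q * q' = 1" using assms(1) by blast
  interpret tlx ofK q q' g1 g2 g3 g2i "ofK q' * g1 - ofK (q' * (q - 1))" "g2 * g3 * g2i"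
    "g2 * g1 * g3" "g1 * (g2 * g3 * g2i)"
    by unfold_locales (simp_all add: assms(4,5,6,7) qq)
  from Good_W[of s r] obtain c Ms where h: "\<forall>j\<le>s. c j \<in> subalg ofK {g1, g2 * g3 * g2i}"
    "\<forall>M\<in>set Ms. markov (subalg ofK {g1, g2 * g3 * g2i}) g2 M"
    "g3 * (g2 * g3 * g2i) * (g1 * (g2 * g3 * g2i)) ^ s * g3 * (g1 * (g2 * g3 * g2i)) ^ r
       = (\<Sum>j = 0..s. c j * (g2 * g1 * g3) ^ j) + sum_list Ms"
    unfolding Good_def by blast
  show ?thesis unfolding Let_def
    by (rule exI[of _ s], rule exI[of _ c], rule exI[of _ Ms]) (simp add: h)
qed

end
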